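(* Let $H$ be an edge-critical graph with $\chi(H)=r+1\ge3$. For every $r$-tuple $S=(S_1,\dots,S_r)$ of pairwise disjoint subsets of $[n]$ with $|S_1|>v_H$ and every graph $Q\subseteq K_n$ all of whose edges have both endpoints in $S_1$, \[ |\mathcal{F}_Q^{\mathrm{low}}[\mathrm{ext}(S)]|\ge\Big(1-\frac{v_H^2\,\Delta(Q)}{|S_1|-v_H}\Big)\cdot e(Q)\cdot N(H,K_S^+), \] where $K_S^+=\mathrm{ext}(S)\cup\{uv\}$ for two distinct vertices $u,v\in S_1$.
   Context: Graphs are identified with edge sets. $\mathrm{ext}(S)$ is the set of pairs of vertices meeting two distinct $S_i$. $\mathcal{H}$ is the family of all copies of $H$ in $K_n$ (as edge sets). $\mathcal{H}_Q^{\mathrm{low}}=\{A\in\mathcal{H}: |A\cap Q|=1 \text{ and } Q[V(A)] \text{ has exactly one edge}\}$ and $\mathcal{F}_Q^{\mathrm{low}}=\{A\setminus Q: A\in\mathcal{H}_Q^{\mathrm{low}}\}$. For a family $\mathcal{F}$ of edge sets and a graph $G$, $\mathcal{F}[G]=\{\omega\in\mathcal{F}:\omega\subseteq G\}$. $N(H,G)$ is the number of copies of $H$ in $G$; $\Delta(Q)$ is the maximum degree. *)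

theory Defs
  imports Complex_Main
begin

definition simple_graph :: "'a set \<Rightarrow> 'a set set \<Rightarrow> bool" where
  "simple_graph V E \<longleftrightarrow> finite V \<and> (\<forall>e\<in>E. \<exists>x y. x \<noteq> y \<and> x \<in> V \<and> y \<in> V \<and> e = {x, y})"

definition colorable :: "'a set \<Rightarrow> 'a set set \<Rightarrow> nat \<Rightarrow> bool" where
  "colorable V E k \<longleftrightarrow> (\<exists>f. (\<forall>x\<in>V. f x < k) \<and> (\<forall>x\<in>V. \<forall>y\<in>V. {x, y} \<in> E \<longrightarrow> f x \<noteq> f y))"

definition chromatic_number :: "'a set \<Rightarrow> 'a set set \<Rightarrow> nat" where
  "chromatic_number V E = (LEAST k. colorable V E k)"

definition edge_critical :: "'a set \<Rightarrow> 'a set set \<Rightarrow> bool" where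
  "edge_critical V E \<longleftrightarrow> (\<exists>e\<in>E. chromatic_number V (E - {e}) < chromatic_number V E)"

definition Kn :: "nat \<Rightarrow> nat set set" where
  "Kn n = {{x, y} | x y. x \<noteq> y \<and> x \<in> {1..n} \<and> y \<in> {1..n}}"

definition copies :: "'a set \<Rightarrow> 'a set set \<Rightarrow> nat \<Rightarrow> nat set set set" where
  "copies VH EH n = {(\<lambda>e. \<phi> ` e) ` EH | \<phi>. inj_on \<phi> VH \<and> \<phi> ` VH \<subseteq> {1..n}}"

definition Ncop :: "'a set \<Rightarrow> 'a set set \<Rightarrow> nat \<Rightarrow> nat set set \<Rightarrow> nat" where
  "Ncop VH EH n G = card {A \<in> copies VH EH n. A \<subseteq> G}"

definition verts :: "nat set set \<Rightarrow> nat set" where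
  "verts A = \<Union>A"

definition induced :: "nat set set \<Rightarrow> nat set \<Rightarrow> nat set set" where
  "induced Q W = {e \<in> Q. e \<subseteq> W}"

definition H_low :: "'a set \<Rightarrow> 'a set set \<Rightarrow> nat \<Rightarrow> nat set set \<Rightarrow> nat set set set" where
  "H_low VH EH n Q = {A \<in> copies VH EH n. card (A \<inter> Q) = 1 \<and> card (induced Q (verts A)) = 1}"

definition F_low :: "'a set \<Rightarrow> 'a set set \<Rightarrow> nat \<Rightarrow> nat set set \<Rightarrow> nat set set set" where
  "F_low VH EH n Q = (\<lambda>A. A - Q) ` H_low VH EH n Q"

definition restrict_fam :: "nat set set set \<Rightarrow> nat set set \<Rightarrow> nat set set set" where
  "restrict_fam F G = {\<omega> \<in> F. \<omega> \<subseteq> G}"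

text \<open>ext(S) for an r-tuple S_1..S_r, here indexed as S 0, ..., S (r-1).\<close>
definition ext :: "nat \<Rightarrow> (nat \<Rightarrow> nat set) \<Rightarrow> nat set set" where
  "ext r S = {{x, y} | x y. \<exists>i<r. \<exists>j<r. i \<noteq> j \<and> x \<in> S i \<and> y \<in> S j}"

definition degree :: "nat set set \<Rightarrow> nat \<Rightarrow> nat" where
  "degree Q v = card {e \<in> Q. v \<in> e}"

definition max_degree :: "nat set set \<Rightarrow> nat" where
  "max_degree Q = Max (insert 0 (degree Q ` verts Q))"

end

theory Submission imports Defs begin

definition tr :: "nat \<Rightarrow> nat \<Rightarrow> nat \<Rightarrow> nat" where
  "tr a b x = (if x = a then b else if x = b then a else x)"

definition img :: "nat \<Rightarrow> nat \<Rightarrow> nat set set \<Rightarrow> nat set set" where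
  "img a b G = (\<lambda>f. tr a b ` f) ` G"

lemma tr_tr[simp]: "tr a b (tr a b x) = x"
  by (simp add: tr_def)

lemma inj_tr: "inj (tr a b)"
  by (metis injI tr_tr)

lemma tr_image_tr[simp]: "tr a b ` tr a b ` f = f"
  by (simp add: image_image)

lemma img_img[simp]: "img a b (img a b G) = G"
  by (simp add: img_def image_image)

lemma inj_img: "inj (img a b)"
  by (metis injI img_img)

lemma tr_range: "a \<in> {1..n} \<Longrightarrow> b \<in> {1..n} \<Longrightarrow> x \<in> {1..n} \<Longrightarrow> tr a b x \<in> {1..n}"
  by (simp add: tr_def)

lemma sg_edge:
  assumes "simple_graph V E" "e \<in> E"
  shows "\<exists>x y. x \<noteq> y \<and> x \<in> V \<and> y \<in> V \<and> e = {x, y}"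
  using assms unfolding simple_graph_def by simp

lemma sg_edge_sub:
  assumes "simple_graph V E" "e \<in> E"
  shows "e \<subseteq> V"
proof -
  obtain x y where "x \<in> V" "y \<in> V" "e = {x, y}" using sg_edge[OF assms] by blast
  then show ?thesis by simp
qed

lemma copies_edges_sub:
  assumes H: "simple_graph VH EH" and A: "A \<in> copies VH EH n"
  shows "\<exists>\<phi>. inj_on \<phi> VH \<and> \<phi> ` VH \<subseteq> {1..n} \<and> A = (\<lambda>e. \<phi> ` e) ` EH"
  using A unfolding copies_def by blast

lemma copy_edge:
  assumes H: "simple_graph VH EH" and A: "A \<in> copies VH EH n" and f: "f \<in> A"
  shows "\<exists>a b. a \<noteq> b \<and> a \<in> {1..n} \<and> b \<in> {1..n} \<and> f = {a, b}"
proof -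
  obtain \<phi> where p: "inj_on \<phi> VH" "\<phi> ` VH \<subseteq> {1..n}" "A = (\<lambda>e. \<phi> ` e) ` EH"
    using A unfolding copies_def by blast
  then obtain e where e: "e \<in> EH" "f = \<phi> ` e" using f by blast
  then obtain x y where xy: "x \<noteq> y" "x \<in> VH" "y \<in> VH" "e = {x, y}"
    using sg_edge[OF H e(1)] by blast
  have "\<phi> x \<noteq> \<phi> y" using p(1) xy unfolding inj_on_def by blast
  moreover have "\<phi> x \<in> {1..n}" "\<phi> y \<in> {1..n}" using p(2) xy(2,3) by (simp_all add: image_subset_iff)
  ultimately show ?thesis by (intro exI[of _ "\<phi> x"] exI[of _ "\<phi> y"]) (simp add: e xy)
qed

lemma verts_copy:
  assumes H: "simple_graph VH EH" and A: "A \<in> copies VH EH n"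
  shows "finite (verts A)" "card (verts A) \<le> card VH" "verts A \<subseteq> {1..n}"
proof -
  obtain \<phi> where p: "inj_on \<phi> VH" "\<phi> ` VH \<subseteq> {1..n}" "A = (\<lambda>e. \<phi> ` e) ` EH"
    using A unfolding copies_def by blast
  have fin: "finite VH" using H unfolding simple_graph_def by auto
  have sub: "verts A \<subseteq> \<phi> ` VH"
  proof
    fix x assume "x \<in> verts A"
    then obtain e where "e \<in> EH" "x \<in> \<phi> ` e" using p(3) unfolding verts_def by auto
    moreover have "e \<subseteq> VH" using H \<open>e \<in> EH\<close> by (rule sg_edge_sub)
    ultimately show "x \<in> \<phi> ` VH" by blast
  qed
  have f2: "finite (\<phi> ` VH)" using fin by (rule finite_imageI)
  show "finite (verts A)" using sub f2 by (rule finite_subset)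
  have "card (verts A) \<le> card (\<phi> ` VH)" using f2 sub by (rule card_mono)
  also have "\<dots> \<le> card VH" using fin by (rule card_image_le)
  finally show "card (verts A) \<le> card VH" .
  show "verts A \<subseteq> {1..n}" using sub p(2) by (rule subset_trans)
qed

lemma finite_copies:
  assumes H: "simple_graph VH EH"
  shows "finite (copies VH EH n)"
proof -
  have "copies VH EH n \<subseteq> Pow (Pow {1..n})"
  proof
    fix A assume A: "A \<in> copies VH EH n"
    have "verts A \<subseteq> {1..n}" using verts_copy[OF H A] by simp
    then show "A \<in> Pow (Pow {1..n})" unfolding verts_def by auto
  qed
  then show ?thesis by (meson finite_Pow_iff finite_atLeastAtMost finite_subset)
qed

lemma copies_img:
  assumes A: "A \<in> copies VH EH n" and ab: "a \<in> {1..n}" "b \<in> {1..n}"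
  shows "img a b A \<in> copies VH EH n"
proof -
  obtain \<phi> where p: "inj_on \<phi> VH" "\<phi> ` VH \<subseteq> {1..n}" "A = (\<lambda>e. \<phi> ` e) ` EH"
    using A unfolding copies_def by blast
  have "inj_on (tr a b \<circ> \<phi>) VH" using p(1) by (meson comp_inj_on inj_tr inj_on_subset subset_UNIV)
  moreover have "(tr a b \<circ> \<phi>) ` VH \<subseteq> {1..n}" using p(2) ab tr_range by auto
  moreover have "img a b A = (\<lambda>e. (tr a b \<circ> \<phi>) ` e) ` EH"
    unfolding img_def p(3) by (simp add: image_image image_comp)
  ultimately show ?thesis unfolding copies_def by blast
qed

lemma Ncop_le_img:
  assumes H: "simple_graph VH EH" and ab: "a \<in> {1..n}" "b \<in> {1..n}"
  shows "Ncop VH EH n G \<le> Ncop VH EH n (img a b G)"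
  unfolding Ncop_def
proof (rule card_inj_on_le)
  show "inj_on (img a b) {A \<in> copies VH EH n. A \<subseteq> G}" using inj_img by (meson inj_on_subset subset_UNIV)
  show "img a b ` {A \<in> copies VH EH n. A \<subseteq> G} \<subseteq> {A \<in> copies VH EH n. A \<subseteq> img a b G}"
    using copies_img[OF _ ab] unfolding img_def by auto
  show "finite {A \<in> copies VH EH n. A \<subseteq> img a b G}" using finite_copies[OF H] by simp
qed

lemma Ncop_img:
  assumes H: "simple_graph VH EH" and ab: "a \<in> {1..n}" "b \<in> {1..n}"
  shows "Ncop VH EH n G = Ncop VH EH n (img a b G)"
  using Ncop_le_img[OF assms, of G] Ncop_le_img[OF assms, of "img a b G"] by simp


lemma copy_colorable:
  assumes H: "simple_graph VH EH" and A: "A \<in> copies VH EH n"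
    and ck: "\<forall>a. c a < k" and cA: "\<forall>a b. {a, b} \<in> A \<longrightarrow> a \<noteq> b \<longrightarrow> c a \<noteq> c b"
  shows "colorable VH EH k"
proof -
  obtain \<phi> where p: "inj_on \<phi> VH" "\<phi> ` VH \<subseteq> {1..n}" "A = (\<lambda>e. \<phi> ` e) ` EH"
    using A unfolding copies_def by blast
  have "\<forall>x\<in>VH. \<forall>y\<in>VH. {x, y} \<in> EH \<longrightarrow> c (\<phi> x) \<noteq> c (\<phi> y)"
  proof (intro ballI impI)
    fix x y assume xy: "x \<in> VH" "y \<in> VH" "{x, y} \<in> EH"
    obtain p q where pq: "p \<noteq> q" "{x, y} = {p, q}" using sg_edge[OF H xy(3)] by blast
    have "x \<noteq> y"
    proof
      assume "x = y"
      then have e1: "{p, q} = {x}" using pq by simp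
      have "p \<in> {x}" "q \<in> {x}" by (simp_all only: e1[symmetric] insert_iff simp_thms)
      then show False using pq(1) by simp
    qed
    then have n1: "\<phi> x \<noteq> \<phi> y" using p(1) xy unfolding inj_on_def by blast
    have "\<phi> ` {x, y} \<in> A" unfolding p(3) using xy(3) by (rule imageI)
    then have n2: "{\<phi> x, \<phi> y} \<in> A" by simp
    show "c (\<phi> x) \<noteq> c (\<phi> y)" using cA n2 n1 by simp
  qed
  then show ?thesis unfolding colorable_def using ck by (intro exI[of _ "c \<circ> \<phi>"]) simp
qed

lemma not_colorable:
  assumes "chromatic_number V E = r + 1"
  shows "\<not> colorable V E r"
proof
  assume "colorable V E r"
  then have "(LEAST k. colorable V E k) \<le> r" by (rule Least_le)
  then show False using assms unfolding chromatic_number_def by simp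
qed

definition colS :: "nat \<Rightarrow> (nat \<Rightarrow> nat set) \<Rightarrow> nat \<Rightarrow> nat" where
  "colS r S a = (if \<exists>i<r. a \<in> S i then (LEAST i. i < r \<and> a \<in> S i) else 0)"

lemma colS_eq:
  assumes Sdisj: "\<forall>i<r. \<forall>j<r. i \<noteq> j \<longrightarrow> S i \<inter> S j = {}" and i: "i < r" "a \<in> S i"
  shows "colS r S a = i"
proof -
  have "(LEAST i. i < r \<and> a \<in> S i) = i"
  proof (rule Least_equality)
    show "i < r \<and> a \<in> S i" using i by simp
    fix j assume "j < r \<and> a \<in> S j"
    then have "j = i" using i Sdisj by blast
    then show "i \<le> j" by simp
  qed
  then show ?thesis using i unfolding colS_def by auto
qed

lemma colS_lt: "0 < r \<Longrightarrow> colS r S a < r"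
proof -
  assume r: "0 < r"
  show ?thesis
  proof (cases "\<exists>i<r. a \<in> S i")
    case True
    then have "(LEAST i. i < r \<and> a \<in> S i) < r" by (metis (mono_tags, lifting) LeastI)
    then show ?thesis using True unfolding colS_def by simp
  next
    case False
    then have "colS r S a = 0" unfolding colS_def by (rule if_not_P)
    then show ?thesis using r by simp
  qed
qed

lemma ext_edge:
  assumes "{a, b} \<in> ext r S"
  shows "\<exists>i<r. \<exists>j<r. i \<noteq> j \<and> a \<in> S i \<and> b \<in> S j"
proof -
  obtain x y i j where h: "{a, b} = {x, y}" "i < r" "j < r" "i \<noteq> j" "x \<in> S i" "y \<in> S j"
    using assms unfolding ext_def by blast
  then have "(a = x \<and> b = y) \<or> (a = y \<and> b = x)" by (simp add: doubleton_eq_iff)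
  then show ?thesis
  proof (elim disjE)
    assume "a = x \<and> b = y" then show ?thesis using h by blast
  next
    assume "a = y \<and> b = x" then show ?thesis using h by blast
  qed
qed

lemma ext_col:
  assumes Sdisj: "\<forall>i<r. \<forall>j<r. i \<noteq> j \<longrightarrow> S i \<inter> S j = {}" and "{a, b} \<in> ext r S"
  shows "colS r S a \<noteq> colS r S b"
proof -
  obtain i j where h: "i < r" "j < r" "i \<noteq> j" "a \<in> S i" "b \<in> S j"
    using ext_edge[OF assms(2)] by blast
  have "colS r S a = i" using colS_eq[OF Sdisj h(1,4)] .
  moreover have "colS r S b = j" using colS_eq[OF Sdisj h(2,5)] .
  ultimately show ?thesis using h(3) by simp
qed

lemma ext_Q_disj:
  assumes Sdisj: "\<forall>i<r. \<forall>j<r. i \<noteq> j \<longrightarrow> S i \<inter> S j = {}" and r: "0 < r"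
    and f: "f \<in> ext r S" and fS: "f \<subseteq> S 0"
  shows False
proof -
  obtain x y i j where h: "f = {x, y}" "i < r" "j < r" "i \<noteq> j" "x \<in> S i" "y \<in> S j"
    using f unfolding ext_def by blast
  have "x \<in> S 0" "y \<in> S 0" using h fS by auto
  then have "i = 0" "j = 0" using h Sdisj r by blast+
  then show False using h by simp
qed

lemma tr_S:
  assumes Sdisj: "\<forall>i<r. \<forall>j<r. i \<noteq> j \<longrightarrow> S i \<inter> S j = {}" and r: "0 < r"
    and ab: "a \<in> S 0" "b \<in> S 0" and i: "i < r" "x \<in> S i"
  shows "tr a b x \<in> S i"
proof (cases "x = a \<or> x = b")
  case True
  then have "x \<in> S 0" using ab by auto
  then have "i = 0" using Sdisj i r by blast
  then show ?thesis using ab True unfolding tr_def by auto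
next
  case False
  then show ?thesis using i unfolding tr_def by auto
qed

lemma img_ext_sub:
  assumes Sdisj: "\<forall>i<r. \<forall>j<r. i \<noteq> j \<longrightarrow> S i \<inter> S j = {}" and r: "0 < r"
    and ab: "a \<in> S 0" "b \<in> S 0"
  shows "img a b (ext r S) \<subseteq> ext r S"
proof
  fix g assume "g \<in> img a b (ext r S)"
  then obtain f where f: "f \<in> ext r S" "g = tr a b ` f" unfolding img_def by blast
  obtain x y i j where h: "f = {x, y}" "i < r" "j < r" "i \<noteq> j" "x \<in> S i" "y \<in> S j"
    using f unfolding ext_def by blast
  have "tr a b x \<in> S i" "tr a b y \<in> S j" using tr_S[OF Sdisj r ab] h by auto
  moreover have "g = {tr a b x, tr a b y}" using f h by simp
  ultimately show "g \<in> ext r S" unfolding ext_def using h by blast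
qed

lemma img_ext:
  assumes Sdisj: "\<forall>i<r. \<forall>j<r. i \<noteq> j \<longrightarrow> S i \<inter> S j = {}" and r: "0 < r"
    and ab: "a \<in> S 0" "b \<in> S 0"
  shows "img a b (ext r S) = ext r S"
proof
  show "img a b (ext r S) \<subseteq> ext r S" by (rule img_ext_sub[OF assms])
  have "img a b (img a b (ext r S)) \<subseteq> img a b (ext r S)"
    using img_ext_sub[OF assms] unfolding img_def by blast
  then show "ext r S \<subseteq> img a b (ext r S)" by simp
qed

lemma img_ext_edge:
  assumes Sdisj: "\<forall>i<r. \<forall>j<r. i \<noteq> j \<longrightarrow> S i \<inter> S j = {}" and r: "0 < r"
    and ab: "a \<in> S 0" "b \<in> S 0"
  shows "img a b (ext r S \<union> {{p, q}}) = ext r S \<union> {{tr a b p, tr a b q}}"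
proof -
  have "img a b (ext r S \<union> {{p, q}}) = img a b (ext r S) \<union> {{tr a b p, tr a b q}}"
    unfolding img_def by simp
  then show ?thesis using img_ext[OF assms] by simp
qed

lemma Ncop_swap1:
  assumes H: "simple_graph VH EH"
    and Ssub: "S 0 \<subseteq> {1..n}"
    and Sdisj: "\<forall>i<r. \<forall>j<r. i \<noteq> j \<longrightarrow> S i \<inter> S j = {}" and r: "0 < r"
    and xs: "x \<in> S 0" "u \<in> S 0" "x \<noteq> y" "u \<noteq> y"
  shows "Ncop VH EH n (ext r S \<union> {{x, y}}) = Ncop VH EH n (ext r S \<union> {{u, y}})"
proof -
  have "Ncop VH EH n (ext r S \<union> {{x, y}}) = Ncop VH EH n (img x u (ext r S \<union> {{x, y}}))"
    using Ncop_img[OF H] Ssub xs by blast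
  also have "img x u (ext r S \<union> {{x, y}}) = ext r S \<union> {{u, y}}"
    using img_ext_edge[OF Sdisj r xs(1,2)] xs unfolding tr_def by simp
  finally show ?thesis .
qed

lemma Ncop_sym:
  assumes H: "simple_graph VH EH"
    and Ssub: "S 0 \<subseteq> {1..n}"
    and Sdisj: "\<forall>i<r. \<forall>j<r. i \<noteq> j \<longrightarrow> S i \<inter> S j = {}" and r: "0 < r"
    and xs: "x \<in> S 0" "y \<in> S 0" "x \<noteq> y" "u \<in> S 0" "v \<in> S 0" "u \<noteq> v"
  shows "Ncop VH EH n (ext r S \<union> {{x, y}}) = Ncop VH EH n (ext r S \<union> {{u, v}})"
proof (cases "u = y")
  case True
  have "Ncop VH EH n (ext r S \<union> {{x, y}}) = Ncop VH EH n (ext r S \<union> {{v, y}})"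
    using Ncop_swap1[OF H Ssub Sdisj r, of x v y] xs True by simp
  also have "{v, y} = {u, v}" using True by auto
  finally show ?thesis .
next
  case False
  have "Ncop VH EH n (ext r S \<union> {{x, y}}) = Ncop VH EH n (ext r S \<union> {{u, y}})"
    using Ncop_swap1[OF H Ssub Sdisj r, of x u y] xs False by simp
  also have "\<dots> = Ncop VH EH n (ext r S \<union> {{y, u}})" by (simp add: insert_commute)
  also have "\<dots> = Ncop VH EH n (ext r S \<union> {{v, u}})"
    using Ncop_swap1[OF H Ssub Sdisj r, of y v u] xs False by simp
  also have "\<dots> = Ncop VH EH n (ext r S \<union> {{u, v}})" by (simp add: insert_commute)
  finally show ?thesis .
qed


lemma verts_img: "a \<in> verts A \<Longrightarrow> tr w z a \<in> verts (img w z A)"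
  unfolding verts_def img_def by auto

definition NQ :: "nat set set \<Rightarrow> nat set \<Rightarrow> nat set" where
  "NQ Q X = {w. \<exists>t\<in>X. {w, t} \<in> Q}"

lemma card_nbr:
  assumes fQ: "finite Q" and fv: "finite (verts Q)"
  shows "card {w. {w, t} \<in> Q} \<le> max_degree Q"
proof (cases "{w. {w, t} \<in> Q} = {}")
  case True then show ?thesis by simp
next
  case False
  then obtain w0 where w0: "{w0, t} \<in> Q" by blast
  then have tv: "t \<in> verts Q" unfolding verts_def by blast
  have "card {w. {w, t} \<in> Q} \<le> card {e \<in> Q. t \<in> e}"
  proof (rule card_inj_on_le[where f = "\<lambda>w. {w, t}"])
    show "inj_on (\<lambda>w. {w, t}) {w. {w, t} \<in> Q}"
    proof (rule inj_onI)
      fix a b assume "a \<in> {w. {w, t} \<in> Q}" "b \<in> {w. {w, t} \<in> Q}" "{a, t} = {b, t}"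
      then show "a = b" by (metis doubleton_eq_iff)
    qed
    show "(\<lambda>w. {w, t}) ` {w. {w, t} \<in> Q} \<subseteq> {e \<in> Q. t \<in> e}" by auto
    show "finite {e \<in> Q. t \<in> e}" using fQ by simp
  qed
  also have "\<dots> = degree Q t" unfolding degree_def by simp
  also have "\<dots> \<le> max_degree Q" unfolding max_degree_def
    using fv tv by (intro Max_ge) auto
  finally show ?thesis .
qed

lemma card_NQ:
  assumes fQ: "finite Q" and fv: "finite (verts Q)" and fX: "finite X"
  shows "card (NQ Q X) \<le> card X * max_degree Q"
proof -
  have "NQ Q X = (\<Union>t\<in>X. {w. {w, t} \<in> Q})" unfolding NQ_def by blast
  then have "card (NQ Q X) \<le> (\<Sum>t\<in>X. card {w. {w, t} \<in> Q})"
    using card_UN_le[OF fX] by simp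
  also have "\<dots> \<le> (\<Sum>t\<in>X. max_degree Q)" by (rule sum_mono) (rule card_nbr[OF fQ fv])
  also have "\<dots> = card X * max_degree Q" by simp
  finally show ?thesis .
qed

lemma NQ_sub: "NQ Q X \<subseteq> verts Q"
  unfolding NQ_def verts_def by blast

locale setting =
  fixes VH :: "'h set" and EH :: "'h set set" and r n :: nat
    and S :: "nat \<Rightarrow> nat set" and Q :: "nat set set"
  assumes H: "simple_graph VH EH"
    and chi: "chromatic_number VH EH = r + 1" and r: "r + 1 \<ge> 3"
    and Ssub: "\<forall>i<r. S i \<subseteq> {1..n}"
    and Sdisj: "\<forall>i<r. \<forall>j<r. i \<noteq> j \<longrightarrow> S i \<inter> S j = {}"
    and S1: "card (S 0) > card VH"
    and Q: "Q \<subseteq> Kn n" and QS: "\<forall>e\<in>Q. e \<subseteq> S 0"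
begin

lemma r0: "0 < r" using r by simp
lemma r1: "1 < r" using r by simp
lemma S0sub: "S 0 \<subseteq> {1..n}" using Ssub r0 by blast
lemma finS0: "finite (S 0)" using S0sub finite_subset by blast

lemma Q_edge: "e \<in> Q \<Longrightarrow> \<exists>x y. x \<noteq> y \<and> e = {x, y} \<and> x \<in> S 0 \<and> y \<in> S 0"
proof -
  assume e: "e \<in> Q"
  then obtain x y where "x \<noteq> y" "e = {x, y}" using Q unfolding Kn_def by blast
  then show ?thesis using QS e by blast
qed

lemma vertsQ: "verts Q \<subseteq> {1..n}"
  using QS S0sub unfolding verts_def by blast

lemma finQ: "finite Q"
proof -
  have "Q \<subseteq> Pow {1..n}" using vertsQ unfolding verts_def by blast
  then show ?thesis by (meson finite_Pow_iff finite_atLeastAtMost finite_subset)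
qed

lemma finvQ: "finite (verts Q)" using vertsQ finite_subset by blast

lemma no_copy_ext:
  assumes A: "A \<in> copies VH EH n" "A \<subseteq> ext r S"
  shows False
proof -
  have "colorable VH EH r"
  proof (rule copy_colorable[OF H A(1)])
    show "\<forall>a. colS r S a < r" using colS_lt r0 by blast
    show "\<forall>a b. {a, b} \<in> A \<longrightarrow> a \<noteq> b \<longrightarrow> colS r S a \<noteq> colS r S b"
      using A(2) ext_col[OF Sdisj] by blast
  qed
  then show False using not_colorable[OF chi] by blast
qed

lemma e_in:
  assumes "A \<in> copies VH EH n" "A \<subseteq> ext r S \<union> {e}"
  shows "e \<in> A"
proof (rule ccontr)
  assume "e \<notin> A"
  then have "A \<subseteq> ext r S" using assms(2) by blast
  then show False using no_copy_ext assms(1) by blast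
qed

lemma AQ:
  assumes e: "e \<in> Q" and A: "A \<in> copies VH EH n" "A \<subseteq> ext r S \<union> {e}"
  shows "A \<inter> Q = {e}"
proof -
  have "f \<notin> Q" if "f \<in> ext r S" for f
    using ext_Q_disj[OF Sdisj r0 that] QS by blast
  then show ?thesis using e_in[OF A] A(2) e by blast
qed

lemma endpoint:
  assumes e: "e \<in> Q" and A: "A \<in> copies VH EH n" "A \<subseteq> ext r S \<union> {e}" and p: "p \<in> e"
  shows "p \<in> verts (A - {e})"
proof (rule ccontr)
  assume np: "p \<notin> verts (A - {e})"
  obtain x y where xy: "x \<noteq> y" "e = {x, y}" "x \<in> S 0" "y \<in> S 0" using Q_edge[OF e] by blast
  obtain q where q: "e = {p, q}" "p \<noteq> q" "q \<in> S 0" using xy p by blast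
  define c where "c = (colS r S)(p := 1)"
  have "colorable VH EH r"
  proof (rule copy_colorable[OF H A(1)])
    show "\<forall>a. c a < r" unfolding c_def using colS_lt r0 r1 by simp
    show "\<forall>a b. {a, b} \<in> A \<longrightarrow> a \<noteq> b \<longrightarrow> c a \<noteq> c b"
    proof (intro allI impI)
      fix a b assume ab: "{a, b} \<in> A" "a \<noteq> b"
      show "c a \<noteq> c b"
      proof (cases "{a, b} = e")
        case True
        have cq: "c q = 0" unfolding c_def using q colS_eq[OF Sdisj r0 q(3)] by simp
        have cp: "c p = 1" unfolding c_def by simp
        have "(a = p \<and> b = q) \<or> (a = q \<and> b = p)" using True q(1) by (simp add: doubleton_eq_iff)
        then show ?thesis using cp cq by auto
      next
        case False
        then have "{a, b} \<in> A - {e}" using ab by blast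
        then have "a \<noteq> p" "b \<noteq> p" using np unfolding verts_def by blast+
        moreover have "{a, b} \<in> ext r S" using False ab A(2) by blast
        ultimately show ?thesis unfolding c_def using ext_col[OF Sdisj] by simp
      qed
    qed
  qed
  then show False using not_colorable[OF chi] by blast
qed

definition C :: "nat set \<Rightarrow> nat set set set" where
  "C e = {A \<in> copies VH EH n. A \<subseteq> ext r S \<union> {e}}"

definition Bad :: "nat set \<Rightarrow> nat set set set" where
  "Bad e = {A \<in> C e. card (induced Q (verts A)) \<noteq> 1}"

definition Good :: "nat set \<Rightarrow> nat set set set" where
  "Good e = {A \<in> C e. card (induced Q (verts A)) = 1}"

lemma finC: "finite (C e)"
  unfolding C_def using finite_copies[OF H] by simp

lemma bad_wit:
  assumes e: "e \<in> Q" "e = {x, y}" and A: "A \<in> Bad e"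
  shows "\<exists>w t. {w, t} \<in> Q \<and> w \<in> verts A \<and> t \<in> verts A \<and> w \<noteq> x \<and> w \<noteq> y \<and> w \<noteq> t"
proof -
  have AC: "A \<in> copies VH EH n" "A \<subseteq> ext r S \<union> {e}" and cd: "card (induced Q (verts A)) \<noteq> 1"
    using A unfolding Bad_def C_def by auto
  have "e \<in> A" using e_in[OF AC] .
  then have "e \<in> induced Q (verts A)" using e unfolding induced_def verts_def by blast
  have "\<exists>e2 \<in> induced Q (verts A). e2 \<noteq> e"
  proof (rule ccontr)
    assume "\<not> (\<exists>e2 \<in> induced Q (verts A). e2 \<noteq> e)"
    then have "induced Q (verts A) = {e}" using \<open>e \<in> induced Q (verts A)\<close> by blast
    then show False using cd by simp
  qed
  then obtain e2 where e2: "e2 \<in> induced Q (verts A)" "e2 \<noteq> e" by blast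
  then have e2Q: "e2 \<in> Q" "e2 \<subseteq> verts A" unfolding induced_def by auto
  obtain a b where ab: "a \<noteq> b" "e2 = {a, b}" using Q_edge[OF e2Q(1)] by blast
  show ?thesis
  proof (cases "a \<noteq> x \<and> a \<noteq> y")
    case True
    then show ?thesis using ab e2Q by (intro exI[of _ a] exI[of _ b]) auto
  next
    case F1: False
    show ?thesis
    proof (cases "b \<noteq> x \<and> b \<noteq> y")
      case True
      have "{b, a} \<in> Q" using ab e2Q by (simp add: insert_commute)
      then show ?thesis using True ab e2Q by (intro exI[of _ b] exI[of _ a]) auto
    next
      case False
      then have "e2 = e" using F1 ab e by auto
      then show ?thesis using e2 by blast
    qed
  qed
qed

end


context setting begin

lemma bad_bound:
  assumes e: "e \<in> Q"
  shows "(card (S 0) - card VH) * card (Bad e) \<le> card VH * (card VH * max_degree Q) * card (C e)"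
proof -
  obtain x y where xy: "x \<noteq> y" "e = {x, y}" "x \<in> S 0" "y \<in> S 0" using Q_edge[OF e] by blast
  have "\<forall>A\<in>Bad e. \<exists>w t. {w, t} \<in> Q \<and> w \<in> verts A \<and> t \<in> verts A \<and> w \<noteq> x \<and> w \<noteq> y \<and> w \<noteq> t"
    using bad_wit[OF e xy(2)] by blast
  then obtain W T where WT: "\<And>A. A \<in> Bad e \<Longrightarrow> {W A, T A} \<in> Q \<and> W A \<in> verts A \<and> T A \<in> verts A
      \<and> W A \<noteq> x \<and> W A \<noteq> y \<and> W A \<noteq> T A"
    by metis
  define P where "P = Sigma (Bad e) (\<lambda>A. S 0 - verts A)"
  define Tg where "Tg = Sigma (C e) (\<lambda>A'. verts A' \<times> NQ Q (verts A'))"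
  define g where "g = (\<lambda>(A, z). (img (W A) z A, z, W A))"
  have finB: "finite (Bad e)" using finC unfolding Bad_def by simp
  have "card P = (\<Sum>A\<in>Bad e. card (S 0 - verts A))"
    unfolding P_def using finB finS0 by (simp add: card_SigmaI)
  also have "\<dots> \<ge> (\<Sum>A\<in>Bad e. card (S 0) - card VH)"
  proof (rule sum_mono)
    fix A assume A: "A \<in> Bad e"
    then have AC: "A \<in> copies VH EH n" unfolding Bad_def C_def by simp
    have "card (S 0) - card VH \<le> card (S 0) - card (verts A)" using verts_copy[OF H AC] by simp
    also have "\<dots> \<le> card (S 0 - verts A)" using verts_copy(1)[OF H AC] by (rule diff_card_le_card_Diff)
    finally show "card (S 0) - card VH \<le> card (S 0 - verts A)" .
  qed
  finally have c1: "card (Bad e) * (card (S 0) - card VH) \<le> card P" by simp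
  have finNQ: "\<And>X. finite (NQ Q X)" using finvQ NQ_sub by (meson finite_subset)
  have finvC: "\<And>A'. A' \<in> C e \<Longrightarrow> finite (verts A')" using verts_copy(1)[OF H] unfolding C_def by blast
  have "inj_on g P"
  proof (rule inj_onI)
    fix p1 p2 assume "p1 \<in> P" "p2 \<in> P" and eq: "g p1 = g p2"
    obtain A1 z1 A2 z2 where p: "p1 = (A1, z1)" "p2 = (A2, z2)" by fastforce
    have "z1 = z2" "W A1 = W A2" "img (W A1) z1 A1 = img (W A2) z2 A2" using eq p unfolding g_def by auto
    then have "A1 = A2" using inj_img by (metis img_img)
    then show "p1 = p2" using p \<open>z1 = z2\<close> by simp
  qed
  moreover have "g ` P \<subseteq> Tg"
  proof
    fix q assume "q \<in> g ` P"
    then obtain A z where Az: "A \<in> Bad e" "z \<in> S 0" "z \<notin> verts A" and q: "q = g (A, z)"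
      unfolding P_def by blast
    define w where "w = W A"
    define t where "t = T A"
    have wt: "{w, t} \<in> Q" "w \<in> verts A" "t \<in> verts A" "w \<noteq> x" "w \<noteq> y" "w \<noteq> t"
      using WT[OF Az(1)] unfolding w_def t_def by auto
    have AC: "A \<in> copies VH EH n" "A \<subseteq> ext r S \<union> {e}" using Az(1) unfolding Bad_def C_def by auto
    have wS: "w \<in> S 0" using wt(1) QS by blast
    have "e \<in> A" using e_in[OF AC] .
    then have xyv: "x \<in> verts A" "y \<in> verts A" using xy unfolding verts_def by auto
    have "img w z A \<in> copies VH EH n" using copies_img[OF AC(1)] wS Az(2) S0sub by blast
    moreover have "img w z A \<subseteq> ext r S \<union> {e}"
    proof -
      have "img w z A \<subseteq> img w z (ext r S \<union> {{x, y}})" using AC(2) xy unfolding img_def by blast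
      also have "\<dots> = ext r S \<union> {{tr w z x, tr w z y}}" by (rule img_ext_edge[OF Sdisj r0 wS Az(2)])
      finally have "img w z A \<subseteq> ext r S \<union> {{tr w z x, tr w z y}}" .
      moreover have "tr w z x = x" "tr w z y = y" using wt xyv Az(3) unfolding tr_def by auto
      ultimately show ?thesis using xy by simp
    qed
    ultimately have A'C: "img w z A \<in> C e" unfolding C_def by simp
    have "tr w z w \<in> verts (img w z A)" using verts_img[OF wt(2)] .
    then have zv: "z \<in> verts (img w z A)" unfolding tr_def by simp
    have "tr w z t \<in> verts (img w z A)" using verts_img[OF wt(3)] .
    moreover have "tr w z t = t" using wt Az(3) unfolding tr_def by auto
    ultimately have "t \<in> verts (img w z A)" by simp
    then have "w \<in> NQ Q (verts (img w z A))" unfolding NQ_def using wt(1) by blast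
    then show "q \<in> Tg" using q A'C zv unfolding g_def Tg_def w_def by simp
  qed
  moreover have finT: "finite Tg"
    unfolding Tg_def using finC finvC finNQ
    by (intro finite_SigmaI finite_cartesian_product) auto
  ultimately have c2: "card P \<le> card Tg" by (rule card_inj_on_le)
  have "card Tg = (\<Sum>A'\<in>C e. card (verts A' \<times> NQ Q (verts A')))"
    unfolding Tg_def using finC finvC finNQ
    by (intro card_SigmaI) auto
  also have "\<dots> \<le> (\<Sum>A'\<in>C e. card VH * (card VH * max_degree Q))"
  proof (rule sum_mono)
    fix A' assume "A' \<in> C e"
    then have AC: "A' \<in> copies VH EH n" unfolding C_def by simp
    have "card (verts A' \<times> NQ Q (verts A')) = card (verts A') * card (NQ Q (verts A'))"
      by (rule card_cartesian_product)
    also have "\<dots> \<le> card VH * (card VH * max_degree Q)"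
    proof (rule mult_le_mono)
      show "card (verts A') \<le> card VH" using verts_copy[OF H AC] by simp
      have "card (NQ Q (verts A')) \<le> card (verts A') * max_degree Q"
        using card_NQ[OF finQ finvQ] verts_copy[OF H AC] by simp
      also have "\<dots> \<le> card VH * max_degree Q" using verts_copy[OF H AC] by simp
      finally show "card (NQ Q (verts A')) \<le> card VH * max_degree Q" .
    qed
    finally show "card (verts A' \<times> NQ Q (verts A')) \<le> card VH * (card VH * max_degree Q)" .
  qed
  also have "\<dots> = card VH * (card VH * max_degree Q) * card (C e)" by simp
  finally show ?thesis using c1 c2 by (simp add: mult.commute)
qed

end


context setting begin

lemma good_real:
  assumes e: "e \<in> Q"
  shows "real (card (Good e)) \<ge> (1 - real (card VH) ^ 2 * real (max_degree Q) / (real (card (S 0)) - real (card VH))) * real (card (C e))"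
proof -
  define s where "s = real (card (S 0)) - real (card VH)"
  have s0: "s > 0" unfolding s_def using S1 by simp
  have CGB: "C e = Good e \<union> Bad e" "Good e \<inter> Bad e = {}" unfolding Good_def Bad_def by auto
  have "card (C e) = card (Good e) + card (Bad e)"
    using CGB finC by (metis card_Un_disjoint finite_Un)
  then have cg: "real (card (Good e)) = real (card (C e)) - real (card (Bad e))" by simp
  have "real ((card (S 0) - card VH) * card (Bad e)) \<le> real (card VH * (card VH * max_degree Q) * card (C e))"
    using bad_bound[OF e] by (simp only: of_nat_le_iff)
  then have "s * real (card (Bad e)) \<le> real (card VH) ^ 2 * real (max_degree Q) * real (card (C e))"
    unfolding s_def using S1 by (simp add: of_nat_diff power2_eq_square mult.assoc)
  then have "real (card (Bad e)) \<le> real (card VH) ^ 2 * real (max_degree Q) * real (card (C e)) / s"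
    using s0 by (simp add: field_simps)
  then show ?thesis unfolding cg s_def[symmetric] using s0 by (simp add: field_simps)
qed

lemma F_bound:
  "real (card (restrict_fam (F_low VH EH n Q) (ext r S))) \<ge> (\<Sum>e\<in>Q. real (card (Good e)))"
proof -
  define h where "h = (\<lambda>(e::nat set, A::nat set set). A - Q)"
  have finSig: "finite (Sigma Q Good)"
    using finQ finC by (intro finite_SigmaI) (auto simp: Good_def)
  have "inj_on h (Sigma Q Good)"
  proof (rule inj_onI)
    fix p1 p2 assume p1: "p1 \<in> Sigma Q Good" and p2: "p2 \<in> Sigma Q Good" and eq: "h p1 = h p2"
    obtain e1 A1 e2 A2 where p: "p1 = (e1, A1)" "p2 = (e2, A2)" by fastforce
    have h1: "e1 \<in> Q" "A1 \<in> copies VH EH n" "A1 \<subseteq> ext r S \<union> {e1}" "card (induced Q (verts A1)) = 1"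
      using p1 p unfolding Good_def C_def by auto
    have h2: "e2 \<in> Q" "A2 \<in> copies VH EH n" "A2 \<subseteq> ext r S \<union> {e2}" "card (induced Q (verts A2)) = 1"
      using p2 p unfolding Good_def C_def by auto
    have q1: "A1 \<inter> Q = {e1}" using AQ h1 by blast
    have q2: "A2 \<inter> Q = {e2}" using AQ h2 by blast
    have d: "A1 - {e1} = A2 - {e2}" using eq p q1 q2 unfolding h_def by auto
    have i1: "e1 \<in> A1" using e_in h1 by blast
    have i2: "e2 \<in> A2" using e_in h2 by blast
    show "p1 = p2"
    proof (cases "e1 = e2")
      case True
      then have "A1 = A2" using d i1 i2 by blast
      then show ?thesis using p True by simp
    next
      case False
      have "e2 \<subseteq> verts (A2 - {e2})" using endpoint[OF h2(1) h2(2) h2(3)] by blast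
      then have "e2 \<subseteq> verts A1" using d unfolding verts_def by blast
      then have "e2 \<in> induced Q (verts A1)" using h2(1) unfolding induced_def by simp
      moreover have "e1 \<in> induced Q (verts A1)" using h1(1) i1 unfolding induced_def verts_def by blast
      ultimately have False using h1(4) False by (metis card_1_singletonE singletonD)
      then show ?thesis ..
    qed
  qed
  moreover have "h ` Sigma Q Good \<subseteq> restrict_fam (F_low VH EH n Q) (ext r S)"
  proof
    fix q assume "q \<in> h ` Sigma Q Good"
    then obtain e A where eA: "e \<in> Q" "A \<in> Good e" and q: "q = A - Q" unfolding h_def by blast
    have h1: "A \<in> copies VH EH n" "A \<subseteq> ext r S \<union> {e}" "card (induced Q (verts A)) = 1"
      using eA unfolding Good_def C_def by auto
    have "A \<inter> Q = {e}" using AQ eA(1) h1 by blast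
    then have "A \<in> H_low VH EH n Q" unfolding H_low_def using h1 by simp
    then have "q \<in> F_low VH EH n Q" unfolding F_low_def q by blast
    moreover have "q \<subseteq> ext r S" using h1(2) eA(1) q by blast
    ultimately show "q \<in> restrict_fam (F_low VH EH n Q) (ext r S)" unfolding restrict_fam_def by blast
  qed
  moreover have "finite (restrict_fam (F_low VH EH n Q) (ext r S))"
  proof -
    have "restrict_fam (F_low VH EH n Q) (ext r S) \<subseteq> (\<lambda>A. A - Q) ` copies VH EH n"
      unfolding restrict_fam_def F_low_def H_low_def by blast
    then show ?thesis using finite_copies[OF H] by (meson finite_imageI finite_subset)
  qed
  ultimately have "card (Sigma Q Good) \<le> card (restrict_fam (F_low VH EH n Q) (ext r S))"
    by (rule card_inj_on_le)
  moreover have "card (Sigma Q Good) = (\<Sum>e\<in>Q. card (Good e))"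
    using finQ finC by (intro card_SigmaI) (auto simp: Good_def)
  ultimately show ?thesis by (metis of_nat_le_iff of_nat_sum)
qed

end

theorem mainTheorem11:
  fixes VH :: "'h set" and EH :: "'h set set" and r n :: nat
    and S :: "nat \<Rightarrow> nat set" and Q :: "nat set set" and u v :: nat
  assumes H: "simple_graph VH EH"
    and crit: "edge_critical VH EH"
    and chi: "chromatic_number VH EH = r + 1" and r: "r + 1 \<ge> 3"
    and Ssub: "\<forall>i<r. S i \<subseteq> {1..n}"
    and Sdisj: "\<forall>i<r. \<forall>j<r. i \<noteq> j \<longrightarrow> S i \<inter> S j = {}"
    and S1: "card (S 0) > card VH"
    and Q: "Q \<subseteq> Kn n" and QS: "\<forall>e\<in>Q. e \<subseteq> S 0"
    and uv: "u \<in> S 0" "v \<in> S 0" "u \<noteq> v"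
  shows "real (card (restrict_fam (F_low VH EH n Q) (ext r S)))
    \<ge> (1 - real (card VH) ^ 2 * real (max_degree Q) / (real (card (S 0)) - real (card VH)))
       * real (card Q) * real (Ncop VH EH n (ext r S \<union> {{u, v}}))"
proof -
  interpret setting VH EH r n S Q using assms by unfold_locales
  define c where "c = 1 - real (card VH) ^ 2 * real (max_degree Q) / (real (card (S 0)) - real (card VH))"
  define N where "N = Ncop VH EH n (ext r S \<union> {{u, v}})"
  have CN: "card (C e) = N" if e: "e \<in> Q" for e
  proof -
    obtain x y where xy: "x \<noteq> y" "e = {x, y}" "x \<in> S 0" "y \<in> S 0" using Q_edge[OF e] by blast
    have "card (C e) = Ncop VH EH n (ext r S \<union> {{x, y}})" unfolding C_def Ncop_def xy(2) ..
    also have "\<dots> = N" unfolding N_def using Ncop_sym[OF H S0sub Sdisj r0 xy(3,4,1) uv] .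
    finally show ?thesis .
  qed
  have "(\<Sum>e\<in>Q. c * real N) \<le> (\<Sum>e\<in>Q. real (card (Good e)))"
    using good_real CN unfolding c_def by (intro sum_mono) simp
  also have "\<dots> \<le> real (card (restrict_fam (F_low VH EH n Q) (ext r S)))" by (rule F_bound)
  finally show ?thesis unfolding c_def[symmetric] N_def[symmetric] by (simp add: mult.commute mult.left_commute)
qed

end
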